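(* Consider the $T$-round online first-price auction problem and the AR-OMD policy described in the context, with a suitable choice of its learning rate $\eta>0$ and grid precision $\epsilon$ (depending only on $T$), and assume the switching budget satisfies $L_T=o(T)$ and is unknown to the learner. Then \[ \sup_{(v_t,m_t)_{t=1}^T\in\mathcal{L}}\mathbb{E}[\mathrm{DR}_T(\pi)]=\tilde{O}(L_T). \]
   Context: Online first-price auction over $T$ rounds: at each round $t$ the learner observes a private value $v_t\in[0,1]$, submits a bid $b_t\in[0,1]$ (possibly randomized, depending only on past $(v_s,m_s)_{s<t}$ and $v_t$), then observes $m_t\in[0,1]$, the highest bid of the other bidders, and receives reward $r(b_t;v_t,m_t)$ with $r(b;v,m)\coloneqq(v-b)\mathbbm{1}(b\ge m)$. The expected dynamic regret is $\mathbb{E}[\mathrm{DR}_T(\pi)]\coloneqq\sum_{t=1}^T\max\{v_t-m_t,0\}-\sum_{t=1}^T\mathbb{E}[r(b_t;v_t,m_t)]$. For $L_T\ge0$, $\mathcal{L}\coloneqq\{(v_t,m_t)_{t=1}^T\in[0,1]^{2T}:\sum_{t=2}^T\mathbbm{1}(m_t\ne m_{t-1})\le L_T\}$. $\tilde{O}(\cdot)$ hides polylogarithmic factors in $T$. AR-OMD policy: there are $N=1/\epsilon$ experts, expert $i$ bidding $\min\{v_t,i\epsilon\}$ with reward $r_{t,i}\coloneqq r(\min\{v_t,i\epsilon\};v_t,m_t)$. Time is split into consecutive batches; a new batch begins at round $t+1$ whenever at a round $t$ which is not the first round of its batch one observes $m_t\ne m_{t-1}$. In round $t$ of a batch starting at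 round $t_0$, the learner bids $\min\{v_t,i\epsilon\}$ with probability $p_{t,i}\propto\exp\left(\eta\left(\sum_{s=t_0}^{t-1}r_{s,i}+o_{t,i}\right)\right)$, where the optimism is $o_{t,i}\coloneqq r(\min\{v_t,i\epsilon\};v_t,m_{t-1})$ (with $m_0\in[0,1]$ an arbitrary fixed value). This is optimistic mirror descent on the probability simplex with negative-entropy regularizer $\frac1\eta\sum_ip_i\ln p_i$, restarted at each batch. *)

theory Defs
  imports Complex_Main "HOL-Library.Landau_Symbols"
begin

definition fpa_reward :: "real \<Rightarrow> real \<Rightarrow> real \<Rightarrow> real" where
  "fpa_reward b v m = (if b \<ge> m then v - b else 0)"

text \<open>Expert i (1 \<le> i \<le> N, grid precision 1/N) bids min v (i/N).\<close>
definition expert_bid :: "nat \<Rightarrow> real \<Rightarrow> nat \<Rightarrow> real" where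
  "expert_bid N v i = min v (real i / real N)"

text \<open>First round of the batch containing round t (rounds are 1..T; index 0 of m
  holds the fixed initial value m_0).\<close>
primrec batch_start :: "(nat \<Rightarrow> real) \<Rightarrow> nat \<Rightarrow> nat" where
  "batch_start m 0 = 1"
| "batch_start m (Suc t) =
     (if 1 \<le> t \<and> t \<noteq> batch_start m t \<and> m t \<noteq> m (t - 1) then Suc t else batch_start m t)"

definition aromd_weight ::
  "nat \<Rightarrow> real \<Rightarrow> (nat \<Rightarrow> real) \<Rightarrow> (nat \<Rightarrow> real) \<Rightarrow> nat \<Rightarrow> nat \<Rightarrow> real" where
  "aromd_weight N \<eta> v m t i =
     exp (\<eta> * ((\<Sum>s\<in>{batch_start m t..<t}. fpa_reward (expert_bid N (v s) i) (v s) (m s))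
              + fpa_reward (expert_bid N (v t) i) (v t) (m (t - 1))))"

definition aromd_prob ::
  "nat \<Rightarrow> real \<Rightarrow> (nat \<Rightarrow> real) \<Rightarrow> (nat \<Rightarrow> real) \<Rightarrow> nat \<Rightarrow> nat \<Rightarrow> real" where
  "aromd_prob N \<eta> v m t i =
     aromd_weight N \<eta> v m t i / (\<Sum>j\<in>{1..N}. aromd_weight N \<eta> v m t j)"

definition aromd_exp_reward ::
  "nat \<Rightarrow> real \<Rightarrow> (nat \<Rightarrow> real) \<Rightarrow> (nat \<Rightarrow> real) \<Rightarrow> nat \<Rightarrow> real" where
  "aromd_exp_reward N \<eta> v m t =
     (\<Sum>i\<in>{1..N}. aromd_prob N \<eta> v m t i * fpa_reward (expert_bid N (v t) i) (v t) (m t))"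

definition aromd_dyn_regret ::
  "nat \<Rightarrow> real \<Rightarrow> nat \<Rightarrow> (nat \<Rightarrow> real) \<Rightarrow> (nat \<Rightarrow> real) \<Rightarrow> real" where
  "aromd_dyn_regret N \<eta> T v m =
     (\<Sum>t=1..T. max (v t - m t) 0) - (\<Sum>t=1..T. aromd_exp_reward N \<eta> v m t)"

definition num_switches :: "nat \<Rightarrow> (nat \<Rightarrow> real) \<Rightarrow> nat" where
  "num_switches T m = card {t\<in>{2..T}. m t \<noteq> m (t - 1)}"

definition in_switch_class :: "nat \<Rightarrow> real \<Rightarrow> (nat \<Rightarrow> real) \<Rightarrow> (nat \<Rightarrow> real) \<Rightarrow> bool" where
  "in_switch_class T L v m \<longleftrightarrow>
     (\<forall>t\<in>{1..T}. v t \<in> {0..1}) \<and> (\<forall>t\<in>{0..T}. m t \<in> {0..1}) \<and>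
     real (num_switches T m) \<le> L"

end

theory Submission
  imports Defs
begin


declare batch_start.simps(2)[simp del]

lemma bs_ge1: "1 \<le> batch_start m t"
  by (induction t) (auto simp: batch_start.simps)

lemma bs_le: "1 \<le> t \<Longrightarrow> batch_start m t \<le> t"
proof (induction t)
  case 0 then show ?case by simp
next
  case (Suc t)
  show ?case
  proof (cases "t = 0")
    case True then show ?thesis by (simp add: batch_start.simps)
  next
    case False then show ?thesis using Suc by (auto simp: batch_start.simps)
  qed
qed

lemma bs_prev: "batch_start m t < t \<Longrightarrow> batch_start m (t-1) = batch_start m t"
proof (cases t)
  case 0 then show ?thesis using bs_ge1[of m 0] by simp
next
  case (Suc t')
  assume a: "batch_start m t < t"
  have d: "batch_start m (Suc t') = (if 1 \<le> t' \<and> t' \<noteq> batch_start m t' \<and> m t' \<noteq> m (t' - 1) then Suc t' else batch_start m t')"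
    by (simp only: batch_start.simps)
  show ?thesis
  proof (cases "1 \<le> t' \<and> t' \<noteq> batch_start m t' \<and> m t' \<noteq> m (t' - 1)")
    case True
    have "batch_start m (Suc t') = Suc t'" using d by (simp only: if_P[OF True])
    then show ?thesis using a Suc by simp
  next
    case False
    have "batch_start m (Suc t') = batch_start m t'" using d by (simp only: if_not_P[OF False])
    then show ?thesis using a Suc by simp
  qed
qed

lemma bs_const: "1 \<le> t \<Longrightarrow> batch_start m t \<le> s \<Longrightarrow> s < t \<Longrightarrow> m s = m (batch_start m t)"
proof (induction t arbitrary: s)
  case 0 then show ?case by simp
next
  case (Suc t)
  show ?case
  proof (cases "batch_start m (Suc t) = Suc t")
    case True then show ?thesis using Suc.prems by linarith
  next
    case False
    have d: "batch_start m (Suc t) = (if 1 \<le> t \<and> t \<noteq> batch_start m t \<and> m t \<noteq> m (t - 1) then Suc t else batch_start m t)"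
      by (simp only: batch_start.simps)
    have nc: "\<not> (1 \<le> t \<and> t \<noteq> batch_start m t \<and> m t \<noteq> m (t - 1))"
    proof
      assume C: "1 \<le> t \<and> t \<noteq> batch_start m t \<and> m t \<noteq> m (t - 1)"
      have "batch_start m (Suc t) = Suc t" using d by (simp only: if_P[OF C])
      with False show False by simp
    qed
    have eq: "batch_start m (Suc t) = batch_start m t" using d by (simp only: if_not_P[OF nc])
    have t1: "1 \<le> t" using Suc.prems eq bs_ge1[of m t] by linarith
    show ?thesis
    proof (cases "s < t")
      case True then show ?thesis proof -
        have "batch_start m t \<le> s" using Suc.prems eq by simp
        then have "m s = m (batch_start m t)" using Suc.IH[OF t1, of s] True by blast
        then show ?thesis using eq by simp
      qed
    next
      case False
      then have st: "s = t" using Suc.prems by simp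
      show ?thesis
      proof (cases "t = batch_start m t")
        case True then show ?thesis using st eq by simp
      next
        case False
        then have "m t = m (t-1)" using nc t1 by blast
        moreover have "m (t-1) = m (batch_start m t)"
          proof -
          have "batch_start m t \<le> t-1" using False bs_le[OF t1, of m] by linarith
          then show ?thesis using Suc.IH[OF t1, of "t-1"] t1 by linarith
        qed
        ultimately show ?thesis using st eq by (metis)
      qed
    qed
  qed
qed

lemma bs_new: "2 \<le> t \<Longrightarrow> batch_start m t = t \<Longrightarrow> 2 \<le> t-1 \<and> m (t-1) \<noteq> m (t-1-1)"
proof -
  assume t2: "2 \<le> t" and b: "batch_start m t = t"
  obtain t' where tt: "t = Suc t'" using t2 by (cases t) auto
  have t'1: "1 \<le> t'" using t2 tt by simp
  have le: "batch_start m t' \<le> t'" using bs_le[OF t'1] .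
  have d: "batch_start m (Suc t') = (if 1 \<le> t' \<and> t' \<noteq> batch_start m t' \<and> m t' \<noteq> m (t' - 1) then Suc t' else batch_start m t')"
    by (simp only: batch_start.simps)
  have c: "1 \<le> t' \<and> t' \<noteq> batch_start m t' \<and> m t' \<noteq> m (t' - 1)"
  proof (rule ccontr)
    assume nc: "\<not> ?thesis"
    have "batch_start m (Suc t') = batch_start m t'" using d by (simp only: if_not_P[OF nc])
    then show False using b tt le by simp
  qed
  have "2 \<le> t'" using c bs_ge1[of m t'] le by linarith
  then show ?thesis using c tt by simp
qed



lemma lse_ge:
  fixes f :: "nat \<Rightarrow> real"
  assumes "finite A" "i \<in> A"
  shows "f i \<le> ln (\<Sum>j\<in>A. exp (f j))"
proof -
  have "exp (f i) \<le> (\<Sum>j\<in>A. exp (f j))"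
    using assms by (intro member_le_sum) auto
  then have "ln (exp (f i)) \<le> ln (\<Sum>j\<in>A. exp (f j))"
    by (subst ln_le_cancel_iff) (auto intro: order.strict_trans2[OF exp_gt_zero])
  then show ?thesis by simp
qed

lemma lse_pos:
  fixes f :: "nat \<Rightarrow> real"
  assumes "finite A" "A \<noteq> {}"
  shows "0 < (\<Sum>j\<in>A. exp (f j))"
  using assms by (intro sum_pos) auto

lemma lse_le:
  fixes f :: "nat \<Rightarrow> real"
  assumes "finite A" "A \<noteq> {}" "\<And>j. j \<in> A \<Longrightarrow> f j \<le> B"
  shows "ln (\<Sum>j\<in>A. exp (f j)) \<le> ln (real (card A)) + B"
proof -
  have "(\<Sum>j\<in>A. exp (f j)) \<le> (\<Sum>j\<in>A. exp B)"
    using assms by (intro sum_mono) auto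
  also have "\<dots> = real (card A) * exp B" by simp
  finally have le: "(\<Sum>j\<in>A. exp (f j)) \<le> real (card A) * exp B" .
  have cpos: "0 < real (card A)" using assms by (simp add: card_gt_0_iff)
  have "ln (\<Sum>j\<in>A. exp (f j)) \<le> ln (real (card A) * exp B)"
    using le lse_pos[OF assms(1,2), of f] cpos by (subst ln_le_cancel_iff) auto
  also have "\<dots> = ln (real (card A)) + B" using cpos by (simp add: ln_mult)
  finally show ?thesis .
qed

lemma lse_step:
  fixes f g :: "nat \<Rightarrow> real"
  assumes "finite A" "A \<noteq> {}" "\<And>j. j \<in> A \<Longrightarrow> f j \<le> g j + 1"
  shows "ln (\<Sum>j\<in>A. exp (f j)) \<le> ln (\<Sum>j\<in>A. exp (g j)) + 1"
proof -
  have "(\<Sum>j\<in>A. exp (f j)) \<le> (\<Sum>j\<in>A. exp (g j + 1))"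
    using assms by (intro sum_mono) auto
  also have "\<dots> = (\<Sum>j\<in>A. exp (g j)) * exp 1" by (simp add: exp_add sum_distrib_right)
  finally have le: "(\<Sum>j\<in>A. exp (f j)) \<le> (\<Sum>j\<in>A. exp (g j)) * exp 1" .
  have gp: "0 < (\<Sum>j\<in>A. exp (g j))" using lse_pos[OF assms(1,2)] .
  have "ln (\<Sum>j\<in>A. exp (f j)) \<le> ln ((\<Sum>j\<in>A. exp (g j)) * exp 1)"
    using le lse_pos[OF assms(1,2), of f] gp by (subst ln_le_cancel_iff) auto
  also have "\<dots> = ln (\<Sum>j\<in>A. exp (g j)) + 1" using gp by (simp add: ln_mult)
  finally show ?thesis .
qed

lemma lse_jensen:
  fixes F r :: "nat \<Rightarrow> real"
  assumes "finite A" "A \<noteq> {}"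
  shows "ln (\<Sum>j\<in>A. exp (F j)) - (\<Sum>i\<in>A. exp (F i) / (\<Sum>j\<in>A. exp (F j)) * r i)
         \<le> ln (\<Sum>j\<in>A. exp (F j - r j))"
proof -
  define W where "W = (\<Sum>j\<in>A. exp (F j))"
  define \<mu> where "\<mu> = (\<Sum>i\<in>A. exp (F i) / W * r i)"
  have Wp: "0 < W" unfolding W_def using lse_pos[OF assms] .
  have muW: "\<mu> * W = (\<Sum>i\<in>A. exp (F i) * r i)"
    unfolding \<mu>_def using Wp by (simp add: sum_distrib_right)
  have each: "exp (F i) * exp (-\<mu>) * (1 + \<mu> - r i) \<le> exp (F i - r i)" for i
  proof -
    have "1 + (\<mu> - r i) \<le> exp (\<mu> - r i)" by (rule exp_ge_add_one_self)
    then have "exp (F i) * exp (-\<mu>) * (1 + \<mu> - r i) \<le> exp (F i) * exp (-\<mu>) * exp (\<mu> - r i)"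
      by (intro mult_left_mono) (auto simp: algebra_simps)
    also have "\<dots> = exp (F i - r i)" by (simp add: exp_add[symmetric])
    finally show ?thesis .
  qed
  have "(\<Sum>i\<in>A. exp (F i) * exp (-\<mu>) * (1 + \<mu> - r i)) \<le> (\<Sum>j\<in>A. exp (F j - r j))"
    by (intro sum_mono each)
  moreover have "(\<Sum>i\<in>A. exp (F i) * exp (-\<mu>) * (1 + \<mu> - r i))
      = exp (-\<mu>) * (W + \<mu> * W - (\<Sum>i\<in>A. exp (F i) * r i))"
    unfolding W_def by (simp add: algebra_simps sum.distrib sum_subtractf sum_distrib_left sum_distrib_right)
  ultimately have le: "exp (-\<mu>) * W \<le> (\<Sum>j\<in>A. exp (F j - r j))" using muW by simp
  have "ln W - \<mu> = ln (exp (-\<mu>) * W)" using Wp by (simp add: ln_mult)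
  also have "\<dots> \<le> ln (\<Sum>j\<in>A. exp (F j - r j))"
    using le Wp by (subst ln_le_cancel_iff) (auto intro: order.strict_trans2[OF _ le])
  finally show ?thesis unfolding W_def \<mu>_def .
qed



definition rw :: "nat \<Rightarrow> (nat \<Rightarrow> real) \<Rightarrow> (nat \<Rightarrow> real) \<Rightarrow> nat \<Rightarrow> nat \<Rightarrow> real" where
  "rw N v m s i = fpa_reward (expert_bid N (v s) i) (v s) (m s)"
definition FF :: "nat \<Rightarrow> (nat \<Rightarrow> real) \<Rightarrow> (nat \<Rightarrow> real) \<Rightarrow> nat \<Rightarrow> nat \<Rightarrow> real" where
  "FF N v m t i = (\<Sum>s\<in>{batch_start m t..t}. rw N v m s i)"
definition GG :: "nat \<Rightarrow> (nat \<Rightarrow> real) \<Rightarrow> (nat \<Rightarrow> real) \<Rightarrow> nat \<Rightarrow> real" where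
  "GG N v m t = ln (\<Sum>i\<in>{1..N}. exp (FF N v m t i))"
definition cj :: "nat \<Rightarrow> real \<Rightarrow> nat" where
  "cj N x = max 1 (nat \<lceil>x * real N\<rceil>)"
definition DD :: "nat \<Rightarrow> (nat \<Rightarrow> real) \<Rightarrow> (nat \<Rightarrow> real) \<Rightarrow> nat \<Rightarrow> real" where
  "DD N v m t = GG N v m t - FF N v m t (cj N (m (batch_start m t)))"

lemma reward_bounds:
  assumes "0 \<le> v" "v \<le> 1"
  shows "0 \<le> fpa_reward (expert_bid N v i) v x" "fpa_reward (expert_bid N v i) v x \<le> 1"
proof -
  have h: "0 \<le> real i / real N" by simp
  have g: "\<And>y::real. 0 \<le> y \<Longrightarrow> 0 \<le> fpa_reward (min v y) v x \<and> fpa_reward (min v y) v x \<le> 1"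
    using assms by (auto simp: fpa_reward_def min_def)
  show "0 \<le> fpa_reward (expert_bid N v i) v x" "fpa_reward (expert_bid N v i) v x \<le> 1"
    using g[OF h] unfolding expert_bid_def by auto
qed

lemma cj_range:
  assumes "1 \<le> N" "0 \<le> x" "x \<le> 1"
  shows "cj N x \<in> {1..N}"
proof -
  have "x * real N \<le> real N" using assms by (simp add: mult_left_le_one_le)
  then have "\<lceil>x * real N\<rceil> \<le> int N" by (simp add: ceiling_le_iff)
  then show ?thesis unfolding cj_def using assms by auto
qed

lemma cj_reward:
  assumes "1 \<le> N" "0 \<le> x" "x \<le> 1" "0 \<le> v" "v \<le> 1"
  shows "max (v - x) 0 - 1 / real N \<le> fpa_reward (expert_bid N v (cj N x)) v x"
proof -
  define b where "b = real (cj N x) / real N"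
  have Npos: "real N > 0" using assms by simp
  have c1: "x * real N \<le> real (cj N x)"
    unfolding cj_def by (metis le_ceiling_iff le_nat_iff max.cobounded2 nat_le_iff of_int_of_nat_eq of_nat_le_iff order_refl ceiling_le_iff le_of_int_ceiling order_trans of_nat_nat le_max_iff_disj nat_ceiling_le_eq)
  have c2: "real (cj N x) \<le> x * real N + 1"
  proof (cases "\<lceil>x * real N\<rceil> \<ge> 1")
    case True
    have "1 \<le> nat \<lceil>x * real N\<rceil>" using True by (simp add: le_nat_iff)
    then have "cj N x = nat \<lceil>x * real N\<rceil>" unfolding cj_def by (simp add: max_def)
    then show ?thesis using True by (simp add: ceiling_le_iff[symmetric])
  next
    case False
    then have "cj N x = 1" unfolding cj_def by simp
    then show ?thesis using assms Npos by simp
  qed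
  have b1: "x \<le> b" using c1 Npos unfolding b_def by (simp add: field_simps)
  have b2: "b \<le> x + 1 / real N" using c2 Npos unfolding b_def by (simp add: field_simps)
  have bid: "expert_bid N v (cj N x) = min v b" unfolding expert_bid_def b_def by simp
  show ?thesis unfolding bid fpa_reward_def using b1 b2 assms Npos
    by (auto simp: min_def max_def) 
qed

definition valid :: "nat \<Rightarrow> (nat \<Rightarrow> real) \<Rightarrow> (nat \<Rightarrow> real) \<Rightarrow> bool" where
  "valid T v m \<longleftrightarrow> (\<forall>t\<in>{1..T}. v t \<in> {0..1}) \<and> (\<forall>t\<in>{0..T}. m t \<in> {0..1})"

definition sw :: "nat \<Rightarrow> (nat \<Rightarrow> real) \<Rightarrow> nat \<Rightarrow> real" where
  "sw T m t = (if t \<in> {2..T} \<and> m t \<noteq> m (t - 1) then 1 else 0)"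

lemma rw_bounds:
  assumes "valid T v m" "s \<in> {1..T}"
  shows "0 \<le> rw N v m s i" "rw N v m s i \<le> 1"
  using reward_bounds[of "v s" N i "m s"] assms unfolding valid_def rw_def by auto

lemma bs_leT: "1 \<le> T \<Longrightarrow> t \<le> T \<Longrightarrow> batch_start m t \<le> T"
  by (cases "t = 0") (auto simp: batch_start.simps intro: order_trans[OF bs_le])

lemma FF_nonneg:
  assumes "valid T v m" "t \<le> T"
  shows "0 \<le> FF N v m t i"
  unfolding FF_def
proof (rule sum_nonneg)
  fix s assume "s \<in> {batch_start m t..t}"
  then have "s \<in> {1..T}" using bs_ge1[of m t] assms(2) by auto
  then show "0 \<le> rw N v m s i" using rw_bounds(1)[OF assms(1)] by blast
qed

lemma m_bs_range:
  assumes "valid T v m" "1 \<le> T" "t \<le> T"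
  shows "0 \<le> m (batch_start m t)" "m (batch_start m t) \<le> 1"
  using assms bs_leT[OF assms(2,3), of m] unfolding valid_def by auto

lemma DD_nonneg:
  assumes "valid T v m" "1 \<le> N" "1 \<le> T" "t \<le> T"
  shows "0 \<le> DD N v m t"
proof -
  have "cj N (m (batch_start m t)) \<in> {1..N}"
    using cj_range[OF assms(2) m_bs_range[OF assms(1,3,4)]] .
  then show ?thesis unfolding DD_def GG_def using lse_ge[of "{1..N}"] by fastforce
qed

lemma FF_split:
  assumes "batch_start m t \<le> t"
  shows "FF N v m t i = (\<Sum>s\<in>{batch_start m t..<t}. rw N v m s i) + rw N v m t i"
  unfolding FF_def using assms
  by (simp add: atLeastLessThanSuc_atLeastAtMost[symmetric] sum.atLeastLessThan_Suc)

lemma FF_prev: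
  assumes "batch_start m t < t"
  shows "FF N v m (t-1) i = (\<Sum>s\<in>{batch_start m t..<t}. rw N v m s i)"
proof -
  have t: "t = Suc (t-1)" using assms by simp
  have "{batch_start m t..t-1} = {batch_start m t..<t}" using t
    by (metis atLeastLessThanSuc_atLeastAtMost)
  then show ?thesis unfolding FF_def bs_prev[OF assms] by simp
qed

lemma weight_eq:
  assumes "m t = m (t-1)" "batch_start m t \<le> t"
  shows "aromd_weight N 1 v m t i = exp (FF N v m t i)"
  unfolding aromd_weight_def FF_split[OF assms(2)] using assms(1) by (simp add: rw_def)

lemma E_nonneg:
  assumes "valid T v m" "t \<in> {1..T}"
  shows "0 \<le> aromd_exp_reward N \<eta> v m t"
  unfolding aromd_exp_reward_def aromd_prob_def aromd_weight_def
  using rw_bounds(1)[OF assms, of N] unfolding rw_def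
  by (intro sum_nonneg mult_nonneg_nonneg divide_nonneg_nonneg sum_nonneg) auto


lemma per_round:
  assumes V: "valid T v m" and N1: "1 \<le> N" and t: "t \<in> {1..T}"
  shows "max (v t - m t) 0 - aromd_exp_reward N 1 v m t
    \<le> 1 / real N + DD N v m (t-1) - DD N v m t
       + (2 + ln (real N)) * ((if t = 1 then 1 else 0) + sw T m t + sw T m (t-1))"
proof -
  have T1: "1 \<le> T" and t1: "1 \<le> t" and tT: "t \<le> T" using t by auto
  have vt: "0 \<le> v t" "v t \<le> 1" and mt: "0 \<le> m t" "m t \<le> 1"
    using V t unfolding valid_def by auto
  have E0: "0 \<le> aromd_exp_reward N 1 v m t" using E_nonneg[OF V t] .
  have mx1: "max (v t - m t) 0 \<le> 1" using vt mt by simp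
  have lnN: "0 \<le> ln (real N)" using N1 by simp
  have Npos: "0 < real N" using N1 by simp
  have sw0: "0 \<le> sw T m s" for s unfolding sw_def by simp
  define K where "K = 2 + ln (real N)"
  define S where "S = (if t = 1 then 1 else 0) + sw T m t + sw T m (t-1)"
  have S0: "0 \<le> S" unfolding S_def using sw0 by (simp add: add_nonneg_nonneg)
  have K0: "0 \<le> K" unfolding K_def using lnN by simp
  have D0: "0 \<le> DD N v m (t-1)" using DD_nonneg[OF V N1 T1] tT by simp
  have Dt0: "0 \<le> DD N v m t" using DD_nonneg[OF V N1 T1 tT] .
  have bst: "batch_start m t \<le> t" using bs_le[OF t1] .
  have A: "finite {1..N}" "{1..N} \<noteq> {}" using N1 by auto
  have cardN: "card {1..N} = N" by simp
  consider (a) "batch_start m t = t" | (b) "batch_start m t < t" "m t \<noteq> m (t-1)"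
    | (c) "batch_start m t < t" "m t = m (t-1)" using bst by linarith
  then have "max (v t - m t) 0 - aromd_exp_reward N 1 v m t \<le> 1 / real N + DD N v m (t-1) - DD N v m t + K * S"
  proof cases
    case a
    have S1: "1 \<le> S"
    proof (cases "t = 1")
      case True then show ?thesis unfolding S_def using sw0 by (simp add: add_nonneg_nonneg)
    next
      case False
      then have "2 \<le> t" using t1 by simp
      from bs_new[OF this a] have "sw T m (t-1) = 1" unfolding sw_def using tT by auto
      then show ?thesis unfolding S_def using sw0[of t] by simp
    qed
    have "FF N v m t i \<le> 1" for i
      unfolding FF_def a using rw_bounds(2)[OF V t] by simp
    then have "GG N v m t \<le> ln (real N) + 1"
      unfolding GG_def using lse_le[OF A, of "FF N v m t" 1] cardN by simp
    moreover have "0 \<le> FF N v m t (cj N (m (batch_start m t)))" using FF_nonneg[OF V tT] .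
    ultimately have "DD N v m t \<le> ln (real N) + 1" unfolding DD_def by simp
    moreover have "K \<le> K * S" using S1 K0 by (simp add: mult_le_cancel_left1)
    ultimately show ?thesis using E0 mx1 D0 Npos unfolding K_def
      by (smt (verit) divide_nonneg_nonneg of_nat_0_le_iff)
  next
    case b
    have "2 \<le> t" using b bs_ge1[of m t] by linarith
    then have "sw T m t = 1" unfolding sw_def using b tT by auto
    then have S1: "1 \<le> S" unfolding S_def using sw0[of "t-1"] by simp
    have bp: "batch_start m (t-1) = batch_start m t" using bs_prev[OF b(1)] .
    have Fst: "FF N v m t i = FF N v m (t-1) i + rw N v m t i" for i
      using FF_split[OF bst] FF_prev[OF b(1)] by simp
    have "GG N v m t \<le> GG N v m (t-1) + 1"
      unfolding GG_def using lse_step[OF A, of "FF N v m t" "FF N v m (t-1)"] Fst rw_bounds(2)[OF V t]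
      by simp
    moreover have "0 \<le> rw N v m t (cj N (m (batch_start m t)))" using rw_bounds(1)[OF V t] .
    ultimately have "DD N v m t \<le> DD N v m (t-1) + 1" unfolding DD_def bp using Fst by simp
    moreover have "K \<le> K * S" using S1 K0 by (simp add: mult_le_cancel_left1)
    ultimately show ?thesis using E0 mx1 D0 Npos lnN unfolding K_def
      by (smt (verit) divide_nonneg_nonneg of_nat_0_le_iff)
  next
    case c
    have bp: "batch_start m (t-1) = batch_start m t" using bs_prev[OF c(1)] .
    have Fst: "FF N v m t i = FF N v m (t-1) i + rw N v m t i" for i
      using FF_split[OF bst] FF_prev[OF c(1)] by simp
    define c0 where "c0 = cj N (m (batch_start m t))"
    have mc: "m (t-1) = m (batch_start m t)"
      using bs_const[OF t1, of m "t-1"] c(1) by linarith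
    have mb: "0 \<le> m (batch_start m t)" "m (batch_start m t) \<le> 1"
      using m_bs_range[OF V T1 tT] by auto
    have r1: "max (v t - m t) 0 - 1 / real N \<le> rw N v m t c0"
      unfolding rw_def c0_def using cj_reward[OF N1 mb vt] c(2) mc by simp
    have w: "aromd_weight N 1 v m t i = exp (FF N v m t i)" for i
      using weight_eq[OF c(2) bst] .
    have E: "aromd_exp_reward N 1 v m t
        = (\<Sum>i\<in>{1..N}. exp (FF N v m t i) / (\<Sum>j\<in>{1..N}. exp (FF N v m t j)) * rw N v m t i)"
      unfolding aromd_exp_reward_def aromd_prob_def w rw_def by simp
    have J: "GG N v m t - aromd_exp_reward N 1 v m t \<le> GG N v m (t-1)"
      unfolding E GG_def using lse_jensen[OF A, of "FF N v m t" "rw N v m t"] Fst by simp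
    have "DD N v m (t-1) - DD N v m t = GG N v m (t-1) - GG N v m t + rw N v m t c0"
      unfolding DD_def bp c0_def using Fst by simp
    then show ?thesis using J r1 S0 K0 by (smt (verit) mult_nonneg_nonneg)
  qed
  then show ?thesis unfolding K_def S_def .
qed



lemma telescope: "(\<Sum>t=(1::nat)..T. (f (t-1) - f t :: real)) = f 0 - f T"
  by (induction T) auto

lemma sum_ind1: "1 \<le> T \<Longrightarrow> (\<Sum>t=(1::nat)..T. (if t = 1 then 1 else 0 :: real)) = 1"
  by (induction T) auto

lemma sum_shift: "(\<Sum>t=(1::nat)..T. f (t-1)) + f T = (\<Sum>t=1..T. f t) + (f 0 :: real)"
  by (induction T) auto

lemma sum_sw: "(\<Sum>t=1..T. sw T m t) = real (num_switches T m)"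
proof -
  have "(\<Sum>t=1..T. sw T m t) = (\<Sum>t\<in>{x\<in>{1..T}. x \<in> {2..T} \<and> m x \<noteq> m (x - 1)}. 1)"
    unfolding sw_def by (subst sum.inter_filter) auto
  also have "{x\<in>{1..T}. x \<in> {2..T} \<and> m x \<noteq> m (x - 1)} = {t\<in>{2..T}. m t \<noteq> m (t - 1)}" by auto
  finally show ?thesis unfolding num_switches_def by simp
qed

lemma total:
  assumes V: "valid T v m" and N1: "1 \<le> N" and T1: "1 \<le> T"
  shows "aromd_dyn_regret N 1 T v m \<le> real T / real N + ln (real N)
     + (2 + ln (real N)) * (1 + 2 * real (num_switches T m))"
proof -
  define K where "K = 2 + ln (real N)"
  have "aromd_dyn_regret N 1 T v m = (\<Sum>t=1..T. max (v t - m t) 0 - aromd_exp_reward N 1 v m t)"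
    unfolding aromd_dyn_regret_def by (simp add: sum_subtractf)
  also have "\<dots> \<le> (\<Sum>t=1..T. 1 / real N + (DD N v m (t-1) - DD N v m t)
       + K * (if t = 1 then 1 else 0) + K * sw T m t + K * sw T m (t-1))"
    using per_round[OF V N1] unfolding K_def by (intro sum_mono) (simp add: algebra_simps)
  also have "\<dots> = real T / real N + (DD N v m 0 - DD N v m T) + K * (\<Sum>t=1..T. (if t = 1 then 1 else 0))
       + K * (\<Sum>t=1..T. sw T m t) + K * (\<Sum>t=1..T. sw T m (t-1))"
    unfolding sum.distrib sum_distrib_left[symmetric] telescope by simp
  also have "\<dots> \<le> real T / real N + ln (real N) + K * (1 + 2 * real (num_switches T m))"
  proof -
    have "DD N v m 0 = ln (real N)"
      unfolding DD_def GG_def FF_def by (simp add: batch_start.simps)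
    moreover have "0 \<le> DD N v m T" using DD_nonneg[OF V N1 T1] by simp
    moreover have "(\<Sum>t=1..T. sw T m (t-1)) \<le> real (num_switches T m)"
      using sum_shift[of "sw T m" T] sum_sw[of T m] by (simp add: sw_def split: if_splits)
    moreover have "0 \<le> K" unfolding K_def using N1 by simp
    ultimately have "K * (\<Sum>t=1..T. sw T m (t-1)) \<le> K * real (num_switches T m)"
      by (intro mult_left_mono) auto
    with \<open>DD N v m 0 = ln (real N)\<close> \<open>0 \<le> DD N v m T\<close> show ?thesis using sum_ind1[OF T1] sum_sw[of T m]
      by (simp add: algebra_simps)
  qed
  finally show ?thesis unfolding K_def .
qed


lemma final_bound:
  assumes V: "valid T v m" and T3: "3 \<le> T" and L0: "0 \<le> L" and ns: "real (num_switches T m) \<le> L"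
  shows "aromd_dyn_regret (max 1 T) 1 T v m \<le> 11 * (ln (real T)) ^ 1 * max L 1"
proof -
  have NT: "max 1 T = T" using T3 by simp
  have T1: "1 \<le> T" using T3 by simp
  have Tp: "0 < real T" using T3 by simp
  have l1: "1 \<le> ln (real T)"
  proof -
    have "exp 1 \<le> real T" using exp_le T3 by linarith
    then have "ln (exp 1) \<le> ln (real T)" using Tp by (subst ln_le_cancel_iff) auto
    then show ?thesis by simp
  qed
  define l where "l = ln (real T)"
  define M where "M = max L 1"
  have M1: "1 \<le> M" and LM: "L \<le> M" unfolding M_def by auto
  have r: "aromd_dyn_regret T 1 T v m \<le> 1 + l + (2 + l) * (1 + 2 * real (num_switches T m))"
    using total[OF V T1 T1] Tp unfolding l_def by simp
  have a: "2 + l \<le> 3 * l" using l1 unfolding l_def by simp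
  have b: "1 + 2 * real (num_switches T m) \<le> 3 * M" using ns LM M1 by simp
  have p0: "(2 + l) * (1 + 2 * real (num_switches T m)) \<le> (3 * l) * (3 * M)"
    using a b l1 unfolding l_def by (intro mult_mono) auto
  have p: "(2 + l) * (1 + 2 * real (num_switches T m)) \<le> 9 * (l * M)"
    using p0 by (simp add: algebra_simps)
  have l1': "1 \<le> l" using l1 unfolding l_def .
  have q: "l * 1 \<le> l * M" using M1 l1' by (intro mult_left_mono) auto
  have "aromd_dyn_regret T 1 T v m \<le> 11 * (l * M)" using r p q l1' by linarith
  then have "aromd_dyn_regret T 1 T v m \<le> 11 * l * M" by (simp add: mult.assoc)
  then show ?thesis unfolding NT l_def M_def by simp
qed

theorem theorem2:
  shows "\<exists>(N :: nat \<Rightarrow> nat) (\<eta> :: nat \<Rightarrow> real).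
           (\<forall>T. N T \<ge> 1 \<and> \<eta> T > 0) \<and>
           (\<forall>L :: nat \<Rightarrow> real. (\<forall>T. L T \<ge> 0) \<longrightarrow> L \<in> o(\<lambda>T. real T) \<longrightarrow>
              (\<exists>(C :: real) (k :: nat). eventually (\<lambda>T.
                 \<forall>v m. in_switch_class T (L T) v m \<longrightarrow>
                   aromd_dyn_regret (N T) (\<eta> T) T v m \<le> C * (ln (real T)) ^ k * max (L T) 1)
               at_top))"
proof (intro exI[of _ "\<lambda>T. max 1 T"] exI[of _ "\<lambda>T. 1::real"] conjI allI impI)
  fix T :: nat show "1 \<le> max 1 T" by simp
next
  fix T :: nat show "(0::real) < 1" by simp
next
  fix L :: "nat \<Rightarrow> real"
  assume L0: "\<forall>T. 0 \<le> L T" and "L \<in> o(\<lambda>T. real T)"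
  show "\<exists>(C :: real) (k :: nat). eventually (\<lambda>T.
                 \<forall>v m. in_switch_class T (L T) v m \<longrightarrow>
                   aromd_dyn_regret (max 1 T) 1 T v m \<le> C * (ln (real T)) ^ k * max (L T) 1)
               at_top"
  proof (rule exI[of _ "11::real"], rule exI[of _ "1::nat"])
    show "eventually (\<lambda>T.
                 \<forall>v m. in_switch_class T (L T) v m \<longrightarrow>
                   aromd_dyn_regret (max 1 T) 1 T v m \<le> 11 * (ln (real T)) ^ 1 * max (L T) 1)
               at_top"
    proof (rule eventually_at_top_linorder[THEN iffD2], rule exI[where x="3::nat"], intro allI impI)
      fix T :: nat and v m
      assume T3: "3 \<le> T" and c: "in_switch_class T (L T) v m"
      have V: "valid T v m" and ns: "real (num_switches T m) \<le> L T"
        using c unfolding in_switch_class_def valid_def by auto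
      show "aromd_dyn_regret (max 1 T) 1 T v m \<le> 11 * (ln (real T)) ^ 1 * max (L T) 1"
        using final_bound[OF V T3 _ ns] L0 by simp
    qed
  qed
qed

end
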